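(* Let $q \geq 5$ be a prime power and let $\mathcal{X}$ be a plane curve of degree $q-1$ defined over $\mathbb{F}_q$ without $\mathbb{F}_q$-linear components with $\mathrm{N}_q(\mathcal{X}) = (q-1)^2$. Then $k_0 \leq q-4$.
   Context: $\mathcal{X}(\mathbb{F}_q)=\mathcal{X}\cap\mathbb{P}^2(\mathbb{F}_q)$, $\mathrm{N}_q(\mathcal{X})=\#\mathcal{X}(\mathbb{F}_q)$; "without $\mathbb{F}_q$-linear components" means no line defined over $\mathbb{F}_q$ is a component. For $0\le i\le q+1$, $a_i$ is the number of $\mathbb{F}_q$-lines $l$ with $\#(l\cap\mathcal{X}(\mathbb{F}_q))=i$, and $k_0 := \min\{i : a_i \neq 0\}$. *)

theory Defs
  imports Main "HOL-Library.Cardinality"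
begin

text \<open>Homogeneous polynomials in three variables X, Y, Z over a field, represented by
  their coefficient functions on exponent triples (i,j,k) (monomial X^i Y^j Z^k).\<close>

type_synonym 'a tpoly = "nat \<times> nat \<times> nat \<Rightarrow> 'a"

definition homog :: "nat \<Rightarrow> ('a::zero) tpoly \<Rightarrow> bool" where
  "homog d F \<longleftrightarrow> (\<forall>i j k. F (i,j,k) \<noteq> 0 \<longrightarrow> i + j + k = d)"

definition tpoly_mult :: "('a::comm_semiring_1) tpoly \<Rightarrow> 'a tpoly \<Rightarrow> 'a tpoly" where
  "tpoly_mult F G = (\<lambda>(i,j,k). \<Sum>a\<le>i. \<Sum>b\<le>j. \<Sum>c\<le>k. F (a,b,c) * G (i-a, j-b, k-c))"

definition linform :: "'a::zero \<Rightarrow> 'a \<Rightarrow> 'a \<Rightarrow> 'a tpoly" where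
  "linform a b c = (\<lambda>m. if m = (1,0,0) then a else if m = (0,1,0) then b
                        else if m = (0,0,1) then c else 0)"

definition tpoly_eval :: "nat \<Rightarrow> ('a::comm_semiring_1) tpoly \<Rightarrow> 'a \<times> 'a \<times> 'a \<Rightarrow> 'a" where
  "tpoly_eval d F = (\<lambda>(x,y,z). \<Sum>i\<le>d. \<Sum>j\<le>d. \<Sum>k\<le>d. F (i,j,k) * x^i * y^j * z^k)"

definition proj_class :: "('a::field) \<times> 'a \<times> 'a \<Rightarrow> ('a \<times> 'a \<times> 'a) set" where
  "proj_class v = {(l * fst v, l * fst (snd v), l * snd (snd v)) | l. l \<noteq> 0}"

definition P2 :: "('a::field \<times> 'a \<times> 'a) set set" where
  "P2 = {proj_class v | v. v \<noteq> (0,0,0)}"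

text \<open>F_q-lines of P^2(F_q), identified with their coefficient classes (a:b:c).\<close>
definition lines :: "('a::field \<times> 'a \<times> 'a) set set" where
  "lines = P2"

definition on_line :: "('a::field \<times> 'a \<times> 'a) set \<Rightarrow> ('a \<times> 'a \<times> 'a) set \<Rightarrow> bool" where
  "on_line l p \<longleftrightarrow> (\<forall>(a,b,c)\<in>l. \<forall>(x,y,z)\<in>p. a*x + b*y + c*z = 0)"

definition rat_points :: "nat \<Rightarrow> ('a::field) tpoly \<Rightarrow> ('a \<times> 'a \<times> 'a) set set" where
  "rat_points d F = {p \<in> P2. \<forall>v\<in>p. tpoly_eval d F v = 0}"

definition Nq :: "nat \<Rightarrow> ('a::field) tpoly \<Rightarrow> nat" where
  "Nq d F = card (rat_points d F)"

definition no_Fq_linear_components :: "nat \<Rightarrow> ('a::field) tpoly \<Rightarrow> bool" where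
  "no_Fq_linear_components d F \<longleftrightarrow>
     \<not> (\<exists>a b c G. (a,b,c) \<noteq> (0,0,0) \<and> homog (d - 1) G \<and> F = tpoly_mult (linform a b c) G)"

definition a_count :: "nat \<Rightarrow> ('a::field) tpoly \<Rightarrow> nat \<Rightarrow> nat" where
  "a_count d F i = card {l \<in> (lines :: ('a \<times> 'a \<times> 'a) set set).
                        card {p \<in> rat_points d F. on_line l p} = i}"

definition k0 :: "nat \<Rightarrow> ('a::field) tpoly \<Rightarrow> nat" where
  "k0 d F = (LEAST i. a_count d F i \<noteq> 0)"

end

theory Submission
  imports Defs "HOL-Computational_Algebra.Polynomial"
begin

lemma if3: "(if \<alpha> = p \<and> \<beta> = r \<and> \<gamma> = s then x else (0::'a::zero)) =
   (if \<alpha> = p then (if \<beta> = r then (if \<gamma> = s then x else 0) else 0) else 0)"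
  by simp

lemma sum_if_out: "(\<Sum>x\<in>A. if P then f x else (0::'a::comm_monoid_add)) = (if P then (\<Sum>x\<in>A. f x) else 0)"
  by (cases P) auto

lemma sum3_delta: "(\<Sum>\<alpha>\<le>i. \<Sum>\<beta>\<le>j. \<Sum>\<gamma>\<le>k. (if \<alpha> = p \<and> \<beta> = r \<and> \<gamma> = s then f \<alpha> \<beta> \<gamma> else (0::'a::comm_monoid_add)))
   = (if p \<le> i \<and> r \<le> j \<and> s \<le> k then f p r s else 0)" for i j k :: nat
  unfolding if3 sum_if_out by (simp add: sum.delta)

lemma lin_mult:
  fixes G :: "('a::comm_semiring_1) tpoly"
  shows "tpoly_mult (linform a b c) G (i,j,k) =
    (if 0 < i then a * G (i-1,j,k) else 0) + (if 0 < j then b * G (i,j-1,k) else 0)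
    + (if 0 < k then c * G (i,j,k-1) else 0)"
proof -
  have e: "linform a b c (\<alpha>,\<beta>,\<gamma>) * G (i-\<alpha>,j-\<beta>,k-\<gamma>) = 
     (if \<alpha> = 1 \<and> \<beta> = 0 \<and> \<gamma> = 0 then a * G (i-\<alpha>,j-\<beta>,k-\<gamma>) else 0) +
     (if \<alpha> = 0 \<and> \<beta> = 1 \<and> \<gamma> = 0 then b * G (i-\<alpha>,j-\<beta>,k-\<gamma>) else 0) +
     (if \<alpha> = 0 \<and> \<beta> = 0 \<and> \<gamma> = 1 then c * G (i-\<alpha>,j-\<beta>,k-\<gamma>) else 0)" for \<alpha> \<beta> \<gamma>
    by (simp add: linform_def)
  have "tpoly_mult (linform a b c) G (i,j,k) = 
    (\<Sum>\<alpha>\<le>i. \<Sum>\<beta>\<le>j. \<Sum>\<gamma>\<le>k. (if \<alpha> = 1 \<and> \<beta> = 0 \<and> \<gamma> = 0 then a * G (i-\<alpha>,j-\<beta>,k-\<gamma>) else 0)) +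
    (\<Sum>\<alpha>\<le>i. \<Sum>\<beta>\<le>j. \<Sum>\<gamma>\<le>k. (if \<alpha> = 0 \<and> \<beta> = 1 \<and> \<gamma> = 0 then b * G (i-\<alpha>,j-\<beta>,k-\<gamma>) else 0)) +
    (\<Sum>\<alpha>\<le>i. \<Sum>\<beta>\<le>j. \<Sum>\<gamma>\<le>k. (if \<alpha> = 0 \<and> \<beta> = 0 \<and> \<gamma> = 1 then c * G (i-\<alpha>,j-\<beta>,k-\<gamma>) else 0))"
    unfolding tpoly_mult_def split_conv e sum.distrib by simp
  also have "\<dots> = (if 0 < i then a * G (i-1,j,k) else 0) + (if 0 < j then b * G (i,j-1,k) else 0)
    + (if 0 < k then c * G (i,j,k-1) else 0)"
    unfolding sum3_delta by (simp add: Suc_le_eq)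
  finally show ?thesis .
qed

lemma trim: "n \<le> A \<Longrightarrow> (\<And>i. n < i \<Longrightarrow> f i = 0) \<Longrightarrow> sum f {..A} = sum f {..(n::nat)}"
  by (rule sum.mono_neutral_right) auto

lemma eval_trim:
  fixes G :: "('a::comm_semiring_1) tpoly"
  assumes "homog n G" "n \<le> A" "n \<le> B" "n \<le> C"
  shows "(\<Sum>i\<le>A. \<Sum>j\<le>B. \<Sum>k\<le>C. G(i,j,k)*x^i*y^j*z^k) = tpoly_eval n G (x,y,z)"
proof -
  have z: "G (i,j,k) = 0" if "n < i \<or> n < j \<or> n < k" for i j k
    using assms(1) that unfolding homog_def by fastforce
  have "(\<Sum>i\<le>A. \<Sum>j\<le>B. \<Sum>k\<le>C. G(i,j,k)*x^i*y^j*z^k) = (\<Sum>i\<le>n. \<Sum>j\<le>B. \<Sum>k\<le>C. G(i,j,k)*x^i*y^j*z^k)"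
    by (rule trim) (use assms z in auto)
  also have "\<dots> = (\<Sum>i\<le>n. \<Sum>j\<le>n. \<Sum>k\<le>C. G(i,j,k)*x^i*y^j*z^k)"
    by (intro sum.cong refl trim) (use assms z in auto)
  also have "\<dots> = (\<Sum>i\<le>n. \<Sum>j\<le>n. \<Sum>k\<le>n. G(i,j,k)*x^i*y^j*z^k)"
    by (intro sum.cong refl trim) (use assms z in auto)
  finally show ?thesis unfolding tpoly_eval_def by simp
qed

lemma PA: "(\<Sum>i\<le>Suc n. \<Sum>j\<le>B. \<Sum>k\<le>C. (if 0<i then a*G(i-1,j,k) else 0)*x^i*y^j*z^k) = a*x*(\<Sum>i\<le>n. \<Sum>j\<le>B. \<Sum>k\<le>C. G(i,j,k)*x^i*y^j*z^k)"
  for a :: "'a::comm_semiring_1"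
  by (simp add: sum.atMost_Suc_shift sum_distrib_left mult_ac del: sum.atMost_Suc)

lemma PB: "(\<Sum>j\<le>Suc n. \<Sum>k\<le>C. (if 0<j then b*G(i,j-1,k) else 0)*x^i*y^j*z^k) = b*y*(\<Sum>j\<le>n. \<Sum>k\<le>C. G(i,j,k)*x^i*y^j*z^k)"
  for b :: "'a::comm_semiring_1"
  by (simp add: sum.atMost_Suc_shift sum_distrib_left mult_ac del: sum.atMost_Suc)

lemma PC: "(\<Sum>k\<le>Suc n. (if 0<k then c*G(i,j,k-1) else 0)*x^i*y^j*z^k) = c*z*(\<Sum>k\<le>n. G(i,j,k)*x^i*y^j*z^k)"
  for c :: "'a::comm_semiring_1"
  by (simp add: sum.atMost_Suc_shift sum_distrib_left mult_ac del: sum.atMost_Suc)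

lemma eval_lin_mult:
  fixes G :: "('a::comm_semiring_1) tpoly"
  assumes "homog n G"
  shows "tpoly_eval (Suc n) (tpoly_mult (linform a b c) G) (x,y,z) = (a*x+b*y+c*z) * tpoly_eval n G (x,y,z)"
proof -
  let ?S = "Suc n"
  have "tpoly_eval (Suc n) (tpoly_mult (linform a b c) G) (x,y,z) =
    (\<Sum>i\<le>?S. \<Sum>j\<le>?S. \<Sum>k\<le>?S. (if 0<i then a*G(i-1,j,k) else 0)*x^i*y^j*z^k) +
    (\<Sum>i\<le>?S. \<Sum>j\<le>?S. \<Sum>k\<le>?S. (if 0<j then b*G(i,j-1,k) else 0)*x^i*y^j*z^k) +
    (\<Sum>i\<le>?S. \<Sum>j\<le>?S. \<Sum>k\<le>?S. (if 0<k then c*G(i,j,k-1) else 0)*x^i*y^j*z^k)"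
    unfolding tpoly_eval_def split_conv lin_mult distrib_right sum.distrib by simp
  also have "\<dots> = a*x*(\<Sum>i\<le>n. \<Sum>j\<le>?S. \<Sum>k\<le>?S. G(i,j,k)*x^i*y^j*z^k) +
    (\<Sum>i\<le>?S. b*y*(\<Sum>j\<le>n. \<Sum>k\<le>?S. G(i,j,k)*x^i*y^j*z^k)) +
    (\<Sum>i\<le>?S. \<Sum>j\<le>?S. c*z*(\<Sum>k\<le>n. G(i,j,k)*x^i*y^j*z^k))"
    by (simp only: PA PB PC)
  also have "\<dots> = a*x*(\<Sum>i\<le>n. \<Sum>j\<le>?S. \<Sum>k\<le>?S. G(i,j,k)*x^i*y^j*z^k) +
    b*y*(\<Sum>i\<le>?S. \<Sum>j\<le>n. \<Sum>k\<le>?S. G(i,j,k)*x^i*y^j*z^k) +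
    c*z*(\<Sum>i\<le>?S. \<Sum>j\<le>?S. \<Sum>k\<le>n. G(i,j,k)*x^i*y^j*z^k)"
    by (simp only: sum_distrib_left)
  also have "\<dots> = (a*x+b*y+c*z) * tpoly_eval n G (x,y,z)"
  proof -
    have e1: "(\<Sum>i\<le>n. \<Sum>j\<le>?S. \<Sum>k\<le>?S. G(i,j,k)*x^i*y^j*z^k) = tpoly_eval n G (x,y,z)"
      by (rule eval_trim[OF assms]) auto
    have e2: "(\<Sum>i\<le>?S. \<Sum>j\<le>n. \<Sum>k\<le>?S. G(i,j,k)*x^i*y^j*z^k) = tpoly_eval n G (x,y,z)"
      by (rule eval_trim[OF assms]) auto
    have e3: "(\<Sum>i\<le>?S. \<Sum>j\<le>?S. \<Sum>k\<le>n. G(i,j,k)*x^i*y^j*z^k) = tpoly_eval n G (x,y,z)"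
      by (rule eval_trim[OF assms]) auto
    show ?thesis unfolding e1 e2 e3 by (simp add: distrib_right)
  qed
  finally show ?thesis .
qed

lemma binary_zero:
  fixes r :: "nat \<Rightarrow> 'a::field"
  assumes fin: "finite S" and card: "d < card S"
  and S: "\<forall>p\<in>S. p \<noteq> (0,0) \<and> (\<Sum>i\<le>d. r i * fst p ^ i * snd p ^ (d-i)) = 0"
  and np: "\<forall>p\<in>S. \<forall>p'\<in>S. \<forall>t. p' = (t * fst p, t * snd p) \<longrightarrow> p' = p"
  and i: "i \<le> d"
  shows "r i = 0"
proof -
  define P where "P = (\<Sum>i\<le>d. monom (r i) i)"
  have cP: "coeff P k = (if k \<le> d then r k else 0)" for k
    unfolding P_def coeff_sum coeff_monom by (simp add: sum.delta)
  have degP: "degree P \<le> d" by (rule degree_le) (simp add: cP)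
  have pP: "poly P t = (\<Sum>i\<le>d. r i * t ^ i)" for t
    unfolding P_def poly_sum poly_monom by simp
  define S1 where "S1 = {p\<in>S. snd p \<noteq> 0}"
  define S0 where "S0 = {p\<in>S. snd p = 0}"
  have SU: "S = S0 \<union> S1" "S0 \<inter> S1 = {}" unfolding S0_def S1_def by auto
  have fin01: "finite S0" "finite S1" using fin unfolding S0_def S1_def by auto
  have cardS: "card S = card S0 + card S1" using SU fin01 card_Un_disjoint by metis
  have S0le: "card S0 \<le> 1"
  proof -
    have "\<forall>p\<in>S0. \<forall>p'\<in>S0. p = p'"
    proof (intro ballI)
      fix p p' assume pp: "p \<in> S0" "p' \<in> S0"
      obtain x y where p: "p = (x,y)" by fastforce
      obtain x' y' where p': "p' = (x',y')" by fastforce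
      have "y = 0" "y' = 0" "x \<noteq> 0" using pp S unfolding S0_def p p' by auto
      then have "p' = ((x'/x) * fst p, (x'/x) * snd p)" using p p' by auto
      moreover have "p \<in> S" "p' \<in> S" using pp unfolding S0_def by auto
      ultimately show "p = p'" using np by metis
    qed
    then show ?thesis using card_le_Suc0_iff_eq[OF fin01(1)] by auto
  qed
  define f where "f p = fst p / snd p" for p :: "'a \<times> 'a"
  have injf: "inj_on f S1"
  proof
    fix p p' assume pp: "p \<in> S1" "p' \<in> S1" and e: "f p = f p'"
    obtain x y where p: "p = (x,y)" by fastforce
    obtain x' y' where p': "p' = (x',y')" by fastforce
    have "y \<noteq> 0" "y' \<noteq> 0" using pp unfolding S1_def p p' by auto
    with e have "x' = (y'/y) * x" unfolding f_def p p' by (simp add: field_simps)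
    then have "p' = ((y'/y) * fst p, (y'/y) * snd p)" using p p' \<open>y \<noteq> 0\<close> by auto
    moreover have "p \<in> S" "p' \<in> S" using pp unfolding S1_def by auto
    ultimately show "p = p'" using np by metis
  qed
  have roots: "f ` S1 \<subseteq> {t. poly P t = 0}"
  proof
    fix t assume "t \<in> f ` S1"
    then obtain x y where xy: "(x,y) \<in> S1" "t = x / y" unfolding f_def by auto
    have y: "y \<noteq> 0" "(x,y) \<in> S" using xy unfolding S1_def by auto
    have "poly P t * y ^ d = (\<Sum>i\<le>d. r i * x ^ i * y ^ (d-i))"
      unfolding pP sum_distrib_right
    proof (intro sum.cong refl)
      fix i assume "i \<in> {..d}"
      then have "y ^ d = y ^ i * y ^ (d - i)" by (simp add: power_add[symmetric])
      then show "r i * t ^ i * y ^ d = r i * x ^ i * y ^ (d - i)"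
        using y xy(2) by (simp add: power_divide)
    qed
    also have "\<dots> = 0" using S y by auto
    finally show "t \<in> {t. poly P t = 0}" using y by simp
  qed
  have bound: "card S1 \<le> degree P" if "P \<noteq> 0"
  proof -
    have "card S1 = card (f ` S1)" using card_image[OF injf] by simp
    also have "\<dots> \<le> card {t. poly P t = 0}" by (rule card_mono[OF poly_roots_finite[OF that] roots])
    also have "\<dots> \<le> degree P" by (rule card_poly_roots_bound[OF that])
    finally show ?thesis .
  qed
  have rd: "r d = 0"
  proof (rule ccontr)
    assume rd: "r d \<noteq> 0"
    have "S0 = {}"
    proof (rule ccontr)
      assume "S0 \<noteq> {}"
      then obtain x y where xy: "(x,y) \<in> S" "y = 0" unfolding S0_def by auto
      then have x: "x \<noteq> 0" using S by auto
      have "(\<Sum>i\<le>d. r i * x ^ i * y ^ (d-i)) = (\<Sum>i\<le>d. if i = d then r i * x ^ i else 0)"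
        by (intro sum.cong refl) (use xy in auto)
      also have "\<dots> = r d * x ^ d" by simp
      finally have "(\<Sum>i\<le>d. r i * x ^ i * y ^ (d-i)) \<noteq> 0" using rd x by simp
      then show False using S xy by auto
    qed
    then have "card S1 = card S" using cardS by simp
    moreover have "P \<noteq> 0" using cP rd by (metis coeff_0 order_refl)
    ultimately show False using bound degP card by linarith
  qed
  have P0: "P = 0"
  proof (rule ccontr)
    assume nz: "P \<noteq> 0"
    have "d \<noteq> 0"
    proof
      assume "d = 0"
      then have "P = 0" using cP rd by (intro poly_eqI) auto
      then show False using nz by simp
    qed
    have "degree P \<le> d - 1"
    proof (rule degree_le, intro allI impI)
      fix k assume "d - 1 < k"
      then have "k = d \<or> d < k" using \<open>d \<noteq> 0\<close> by linarith
      then show "coeff P k = 0" using cP rd by auto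
    qed
    moreover have "card S1 \<ge> d" using cardS S0le card by linarith
    ultimately show False using bound[OF nz] \<open>d \<noteq> 0\<close> by linarith
  qed
  show ?thesis using cP[of i] P0 i by simp
qed

function qd :: "('a::field) tpoly \<Rightarrow> 'a \<Rightarrow> 'a \<Rightarrow> 'a \<Rightarrow> nat \<Rightarrow> nat \<Rightarrow> nat \<Rightarrow> 'a" where
  "qd F a b c i j k = (F (i,j,Suc k) - (if 0 < i then a * qd F a b c (i-1) j (Suc k) else 0)
      - (if 0 < j then b * qd F a b c i (j-1) (Suc k) else 0)) / c"
  by auto
termination by (relation "measure (\<lambda>(F,a,b,c,i,j,k). i+j)") auto

declare qd.simps[simp del]

lemma qd_homog:
  "homog (Suc n) F \<Longrightarrow> qd F a b c i j k \<noteq> 0 \<Longrightarrow> i + j + k = n"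
proof (induction F a b c i j k rule: qd.induct)
  case (1 F a b c i j k)
  show ?case
  proof (rule ccontr)
    assume ne: "i + j + k \<noteq> n"
    have h1: "F (i,j,Suc k) = 0" using 1(3) ne unfolding homog_def by (metis add_Suc_right nat.inject)
    have "0 < i \<Longrightarrow> qd F a b c (i-1) j (Suc k) = 0" using 1(1)[OF _ 1(3)] ne by fastforce
    then have h2: "(if 0 < i then a * qd F a b c (i-1) j (Suc k) else 0) = 0" by simp
    have "0 < j \<Longrightarrow> qd F a b c i (j-1) (Suc k) = 0" using 1(2)[OF _ 1(3)] ne by fastforce
    then have h3: "(if 0 < j then b * qd F a b c i (j-1) (Suc k) else 0) = 0" by simp
    have "qd F a b c i j k = 0" 
      unfolding qd.simps[of F a b c i j k] h1 h2 h3 by simp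
    then show False using 1(4) by simp
  qed
qed

lemma eval_binary:
  fixes R :: "('a::comm_semiring_1) tpoly"
  assumes hR: "homog d R" and Rk: "\<And>i j k. 0 < k \<Longrightarrow> R (i,j,k) = 0"
  shows "tpoly_eval d R (x,y,z) = (\<Sum>i\<le>d. R (i,d-i,0) * x^i * y^(d-i))"
proof -
  have "tpoly_eval d R (x,y,z) = (\<Sum>i\<le>d. \<Sum>j\<le>d. \<Sum>k\<le>d. R(i,j,k)*x^i*y^j*z^k)"
    unfolding tpoly_eval_def by simp
  also have "\<dots> = (\<Sum>i\<le>d. \<Sum>j\<le>d. \<Sum>k\<le>0. R(i,j,k)*x^i*y^j*z^k)"
    by (intro sum.cong refl trim) (auto simp: Rk)
  also have "\<dots> = (\<Sum>i\<le>d. \<Sum>j\<le>d. if j = d - i then R(i,j,0)*x^i*y^j else 0)"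
  proof (intro sum.cong refl)
    fix i j assume "i \<in> {..d}" "j \<in> {..d}"
    show "(\<Sum>k\<le>0. R(i,j,k)*x^i*y^j*z^k) = (if j = d - i then R(i,j,0)*x^i*y^j else 0)"
    proof (cases "j = d - i")
      case False
      then have "R(i,j,0) = 0" using hR unfolding homog_def by (metis add_0_right diff_add_inverse)
      then show ?thesis using False by simp
    qed simp
  qed
  also have "\<dots> = (\<Sum>i\<le>d. R (i,d-i,0) * x^i * y^(d-i))"
    by (intro sum.cong refl) auto
  finally show ?thesis .
qed

lemma tpoly_eval_add: "tpoly_eval d (\<lambda>m. A m + B m) v = tpoly_eval d A v + tpoly_eval d B v"
  by (cases v) (simp add: tpoly_eval_def distrib_right sum.distrib)

lemma core:
  fixes F :: "('a::field) tpoly"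
  assumes hF: "homog (Suc n) F" and c: "c \<noteq> 0"
  and fin: "finite T" and card: "Suc n < card T"
  and T: "\<forall>v\<in>T. v \<noteq> (0,0,0) \<and> a*fst v + b*fst(snd v) + c*snd(snd v) = 0 \<and> tpoly_eval (Suc n) F v = 0"
  and np: "\<forall>v\<in>T. \<forall>w\<in>T. \<forall>t. w = (t*fst v, t*fst(snd v), t*snd(snd v)) \<longrightarrow> w = v"
  shows "\<exists>G. homog n G \<and> F = tpoly_mult (linform a b c) G"
proof -
  define G where "G = (\<lambda>(i,j,k). qd F a b c i j k)"
  have Gq: "G (i,j,k) = qd F a b c i j k" for i j k unfolding G_def by simp
  have hG': "G (i,j,k) \<noteq> 0 \<Longrightarrow> i + j + k = n" for i j k unfolding Gq by (rule qd_homog[OF hF])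
  have hG: "homog n G" unfolding homog_def using hG' by blast
  define LG where "LG = tpoly_mult (linform a b c) G"
  have LGf: "LG (i,j,k) = (if 0 < i then a * G (i-1,j,k) else 0) + (if 0 < j then b * G (i,j-1,k) else 0)
    + (if 0 < k then c * G (i,j,k-1) else 0)" for i j k
    unfolding LG_def by (rule lin_mult)
  have hLG: "homog (Suc n) LG"
    unfolding homog_def
  proof (intro allI impI)
    fix i j k assume "LG (i,j,k) \<noteq> 0"
    then have "(0 < i \<and> G (i-1,j,k) \<noteq> 0) \<or> (0 < j \<and> G (i,j-1,k) \<noteq> 0) \<or> (0 < k \<and> G (i,j,k-1) \<noteq> 0)"
      unfolding LGf by (auto split: if_splits)
    then show "i + j + k = Suc n"
    proof (elim disjE conjE)
      assume "0 < i" "G (i-1,j,k) \<noteq> 0" then show ?thesis using hG'[of "i-1" j k] by simp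
    next
      assume "0 < j" "G (i,j-1,k) \<noteq> 0" then show ?thesis using hG'[of i "j-1" k] by simp
    next
      assume "0 < k" "G (i,j,k-1) \<noteq> 0" then show ?thesis using hG'[of i j "k-1"] by simp
    qed
  qed
  define R where "R = (\<lambda>m. F m - LG m)"
  have FR: "F = (\<lambda>m. LG m + R m)" unfolding R_def by simp
  have hR: "homog (Suc n) R" unfolding homog_def R_def
  proof (intro allI impI)
    fix i j k assume "F(i,j,k) - LG(i,j,k) \<noteq> 0"
    then have "F(i,j,k) \<noteq> 0 \<or> LG(i,j,k) \<noteq> 0" by auto
    then show "i + j + k = Suc n" using hF hLG unfolding homog_def by auto
  qed
  have Rk: "R (i,j,k) = 0" if k0: "0 < k" for i j k
  proof -
    obtain k' where k': "k = Suc k'" using k0 gr0_implies_Suc by blast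
    define A where "A = (if 0 < i then a * G (i-1,j,k) else 0)"
    define B where "B = (if 0 < j then b * G (i,j-1,k) else 0)"
    have "G (i,j,k') = (F (i,j,k) - A - B) / c"
      unfolding G_def split_conv k' A_def B_def by (rule qd.simps)
    then have e: "c * G (i,j,k') = F (i,j,k) - A - B" using c by simp
    have "LG (i,j,k) = A + B + c * G (i,j,k')" unfolding LGf A_def B_def using k' by simp
    then have "LG (i,j,k) = F (i,j,k)" unfolding e by simp
    then show ?thesis unfolding R_def by simp
  qed
  define r where "r i = R (i, Suc n - i, 0)" for i
  define S where "S = (\<lambda>v. (fst v, fst (snd v))) ` T"
  have injS: "inj_on (\<lambda>v. (fst v, fst (snd v))) T"
  proof
    fix v w assume vw: "v \<in> T" "w \<in> T" "(fst v, fst (snd v)) = (fst w, fst (snd w))"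
    obtain x y z where v: "v = (x,y,z)" by (cases v) auto
    obtain x' y' z' where w: "w = (x',y',z')" by (cases w) auto
    have "a*x+b*y+c*z = 0" "a*x'+b*y'+c*z' = 0" using T vw v w by auto
    have xy: "x = x'" "y = y'" using vw v w by auto
    have "c * z - c * z' = (a*x+b*y+c*z) - (a*x'+b*y'+c*z')" using xy by (simp add: algebra_simps)
    then have "c * z = c * z'" using \<open>a*x+b*y+c*z = 0\<close> \<open>a*x'+b*y'+c*z' = 0\<close> by simp
    then show "v = w" using c v w vw by simp
  qed
  have cardS: "card S = card T" unfolding S_def using card_image[OF injS] .
  have Rv: "(\<Sum>i\<le>Suc n. r i * fst p ^ i * snd p ^ (Suc n - i)) = 0" if "p \<in> S" for p
  proof -
    obtain v where v: "v \<in> T" "p = (fst v, fst (snd v))" using \<open>p \<in> S\<close> unfolding S_def by auto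
    obtain x y z where vv: "v = (x,y,z)" by (cases v) auto
    have "tpoly_eval (Suc n) F v = tpoly_eval (Suc n) LG v + tpoly_eval (Suc n) R v"
      by (subst FR) (rule tpoly_eval_add)
    moreover have "tpoly_eval (Suc n) LG v = 0"
      using T v(1) unfolding LG_def vv eval_lin_mult[OF hG] by auto
    ultimately have "tpoly_eval (Suc n) R v = 0" using T v(1) by auto
    moreover have "tpoly_eval (Suc n) R (x,y,z) = (\<Sum>i\<le>Suc n. R (i,Suc n-i,0) * x^i * y^(Suc n-i))"
      by (rule eval_binary[OF hR Rk])
    ultimately show ?thesis unfolding r_def using v vv by simp
  qed
  have S0: "p \<noteq> (0,0)" if "p \<in> S" for p
  proof
    assume p0: "p = (0,0)"
    obtain v where v: "v \<in> T" "p = (fst v, fst (snd v))" using \<open>p \<in> S\<close> unfolding S_def by auto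
    obtain x y z where vv: "v = (x,y,z)" by (cases v) auto
    have "c * z = 0" using T v vv p0 by auto
    then show False using c T v vv p0 by auto
  qed
  have npS: "\<forall>p\<in>S. \<forall>p'\<in>S. \<forall>t. p' = (t * fst p, t * snd p) \<longrightarrow> p' = p"
  proof (intro ballI allI impI)
    fix p p' t assume pp: "p \<in> S" "p' \<in> S" "p' = (t * fst p, t * snd p)"
    obtain v where v: "v \<in> T" "p = (fst v, fst (snd v))" using pp unfolding S_def by auto
    obtain w where w: "w \<in> T" "p' = (fst w, fst (snd w))" using pp unfolding S_def by auto
    obtain x y z where vv: "v = (x,y,z)" by (cases v) auto
    obtain x' y' z' where ww: "w = (x',y',z')" by (cases w) auto
    have e: "a*x+b*y+c*z = 0" "a*x'+b*y'+c*z' = 0" using T v w vv ww by auto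
    have xy: "x' = t * x" "y' = t * y" using pp v w vv ww by auto
    have "c*z' - c*(t*z) = (a*x'+b*y'+c*z') - t*(a*x+b*y+c*z)" by (simp add: xy algebra_simps)
    then have "c * z' = c * (t * z)" using e by simp
    then have "z' = t * z" using c by simp
    then have "w = (t*fst v, t*fst(snd v), t*snd(snd v))" using vv ww xy by simp
    then have "w = v" using np v w by blast
    then show "p' = p" using v w by simp
  qed
  have r0: "r i = 0" if "i \<le> Suc n" for i
    by (rule binary_zero[of S "Suc n" r i]) (use fin cardS card Rv S0 npS that S_def in auto)
  have "R m = 0" for m
  proof -
    obtain i j k where m: "m = (i,j,k)" by (cases m) auto
    show ?thesis
    proof (cases "0 < k \<or> i + j + k \<noteq> Suc n")
      case True
      then show ?thesis using Rk hR unfolding m homog_def by (metis)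
    next
      case False
      then have "k = 0" "j = Suc n - i" "i \<le> Suc n" by auto
      then show ?thesis using r0 unfolding m r_def by simp
    qed
  qed
  then have "F = LG" using FR by simp
  then show ?thesis using hG unfolding LG_def by blast
qed

definition swYZ :: "'a tpoly \<Rightarrow> 'a tpoly" where "swYZ F = (\<lambda>(i,j,k). F (i,k,j))"
definition vYZ :: "'a \<times> 'a \<times> 'a \<Rightarrow> 'a \<times> 'a \<times> 'a" where "vYZ v = (fst v, snd (snd v), fst (snd v))"
definition swXY :: "'a tpoly \<Rightarrow> 'a tpoly" where "swXY F = (\<lambda>(i,j,k). F (j,i,k))"
definition vXY :: "'a \<times> 'a \<times> 'a \<Rightarrow> 'a \<times> 'a \<times> 'a" where "vXY v = (fst (snd v), fst v, snd (snd v))"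

lemma swYZ_app[simp]: "swYZ F (i,j,k) = F (i,k,j)" unfolding swYZ_def by simp
lemma swXY_app[simp]: "swXY F (i,j,k) = F (j,i,k)" unfolding swXY_def by simp
lemma swYZ_swYZ[simp]: "swYZ (swYZ F) = F" unfolding swYZ_def by auto
lemma swXY_swXY[simp]: "swXY (swXY F) = F" unfolding swXY_def by auto

lemma homog_swYZ: "homog d F \<Longrightarrow> homog d (swYZ F)" 
  unfolding homog_def swYZ_app by (metis add.commute add.left_commute)
lemma homog_swXY: "homog d F \<Longrightarrow> homog d (swXY F)"
  unfolding homog_def swXY_app by (metis add.commute add.left_commute)

lemma eval_swYZ: "tpoly_eval d (swYZ F) (vYZ v) = tpoly_eval d F v"
proof -
  obtain x y z where v: "v = (x,y,z)" by (cases v) auto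
  have "tpoly_eval d (swYZ F) (vYZ v) = (\<Sum>i\<le>d. \<Sum>j\<le>d. \<Sum>k\<le>d. F (i,k,j) * x^i * z^j * y^k)"
    unfolding tpoly_eval_def v vYZ_def by simp
  also have "\<dots> = (\<Sum>i\<le>d. \<Sum>k\<le>d. \<Sum>j\<le>d. F (i,k,j) * x^i * z^j * y^k)"
    by (rule sum.cong[OF refl], rule sum.swap)
  also have "\<dots> = tpoly_eval d F v"
    unfolding tpoly_eval_def v split_conv by (intro sum.cong refl) (simp add: mult_ac)
  finally show ?thesis .
qed

lemma eval_swXY: "tpoly_eval d (swXY F) (vXY v) = tpoly_eval d F v"
proof -
  obtain x y z where v: "v = (x,y,z)" by (cases v) auto
  have "tpoly_eval d (swXY F) (vXY v) = (\<Sum>i\<le>d. \<Sum>j\<le>d. \<Sum>k\<le>d. F (j,i,k) * y^i * x^j * z^k)"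
    unfolding tpoly_eval_def v vXY_def by simp
  also have "\<dots> = (\<Sum>j\<le>d. \<Sum>i\<le>d. \<Sum>k\<le>d. F (j,i,k) * y^i * x^j * z^k)"
    by (rule sum.swap[of "\<lambda>i j. \<Sum>k\<le>d. F (j,i,k) * y^i * x^j * z^k"])
  also have "\<dots> = tpoly_eval d F v"
    unfolding tpoly_eval_def v split_conv by (intro sum.cong refl) (simp add: mult_ac)
  finally show ?thesis .
qed

lemma mult_swYZ: "tpoly_mult (linform a c b) (swYZ G) = swYZ (tpoly_mult (linform a b c) G)"
  by (rule ext, clarify) (simp add: lin_mult add_ac)

lemma mult_swXY: "tpoly_mult (linform b a c) (swXY G) = swXY (tpoly_mult (linform a b c) G)"
  by (rule ext, clarify) (simp add: lin_mult add_ac)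

definition goodT :: "nat \<Rightarrow> ('a::field) tpoly \<Rightarrow> 'a \<Rightarrow> 'a \<Rightarrow> 'a \<Rightarrow> ('a \<times> 'a \<times> 'a) set \<Rightarrow> bool" where
  "goodT d F a b c T \<longleftrightarrow> finite T \<and> d < card T \<and>
     (\<forall>v\<in>T. v \<noteq> (0,0,0) \<and> a*fst v + b*fst(snd v) + c*snd(snd v) = 0 \<and> tpoly_eval d F v = 0) \<and>
     (\<forall>v\<in>T. \<forall>w\<in>T. \<forall>t. w = (t*fst v, t*fst(snd v), t*snd(snd v)) \<longrightarrow> w = v)"

lemma core': "homog (Suc n) F \<Longrightarrow> c \<noteq> 0 \<Longrightarrow> goodT (Suc n) F a b c T \<Longrightarrow> \<exists>G. homog n G \<and> F = tpoly_mult (linform a b c) G"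
proof -
  assume h: "homog (Suc n) F" "c \<noteq> 0" "goodT (Suc n) F a b c T"
  have g: "finite T" "Suc n < card T"
     "\<forall>v\<in>T. v \<noteq> (0,0,0) \<and> a*fst v + b*fst(snd v) + c*snd(snd v) = 0 \<and> tpoly_eval (Suc n) F v = 0"
     "\<forall>v\<in>T. \<forall>w\<in>T. \<forall>t. w = (t*fst v, t*fst(snd v), t*snd(snd v)) \<longrightarrow> w = v"
    using h(3) unfolding goodT_def by auto
  show ?thesis by (rule core[OF h(1) h(2) g])
qed

lemma inj_vYZ: "inj vYZ" unfolding vYZ_def by (auto intro!: injI simp: prod_eq_iff)
lemma inj_vXY: "inj vXY" unfolding vXY_def by (auto intro!: injI simp: prod_eq_iff)

lemma goodT_YZ: "goodT d F a b c T \<Longrightarrow> goodT d (swYZ F) a c b (vYZ ` T)"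
proof -
  assume g: "goodT d F a b c T"
  have card: "card (vYZ ` T) = card T" by (rule card_image[OF inj_on_subset[OF inj_vYZ subset_UNIV]])
  show ?thesis unfolding goodT_def
  proof (intro conjI ballI allI impI)
    show "finite (vYZ ` T)" using g unfolding goodT_def by simp
    show "d < card (vYZ ` T)" using g card unfolding goodT_def by simp
  next
    fix v assume "v \<in> vYZ ` T"
    then obtain u where u: "u \<in> T" "v = vYZ u" by auto
    then show "v \<noteq> (0,0,0)" using g unfolding goodT_def vYZ_def by (cases u) auto
    show "a * fst v + c * fst (snd v) + b * snd (snd v) = 0" using g u unfolding goodT_def vYZ_def
      by (cases u) (auto simp: add_ac)
    have "tpoly_eval d F u = 0" using g u unfolding goodT_def by blast
    then show "tpoly_eval d (swYZ F) v = 0" using eval_swYZ[of d F u] u by simp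
  next
    fix v w t assume vw: "v \<in> vYZ ` T" "w \<in> vYZ ` T" "w = (t * fst v, t * fst (snd v), t * snd (snd v))"
    then obtain u u' where u: "u \<in> T" "v = vYZ u" "u' \<in> T" "w = vYZ u'" by auto
    then have "u' = (t * fst u, t * fst (snd u), t * snd (snd u))" using vw unfolding vYZ_def
      by (cases u, cases u') auto
    then have "u' = u" using g u unfolding goodT_def by blast
    then show "w = v" using u by simp
  qed
qed

lemma goodT_XY: "goodT d F a b c T \<Longrightarrow> goodT d (swXY F) b a c (vXY ` T)"
proof -
  assume g: "goodT d F a b c T"
  have card: "card (vXY ` T) = card T" by (rule card_image[OF inj_on_subset[OF inj_vXY subset_UNIV]])
  show ?thesis unfolding goodT_def
  proof (intro conjI ballI allI impI)
    show "finite (vXY ` T)" using g unfolding goodT_def by simp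
    show "d < card (vXY ` T)" using g card unfolding goodT_def by simp
  next
    fix v assume "v \<in> vXY ` T"
    then obtain u where u: "u \<in> T" "v = vXY u" by auto
    then show "v \<noteq> (0,0,0)" using g unfolding goodT_def vXY_def by (cases u) auto
    show "b * fst v + a * fst (snd v) + c * snd (snd v) = 0" using g u unfolding goodT_def vXY_def
      by (cases u) (auto simp: add_ac)
    have "tpoly_eval d F u = 0" using g u unfolding goodT_def by blast
    then show "tpoly_eval d (swXY F) v = 0" using eval_swXY[of d F u] u by simp
  next
    fix v w t assume vw: "v \<in> vXY ` T" "w \<in> vXY ` T" "w = (t * fst v, t * fst (snd v), t * snd (snd v))"
    then obtain u u' where u: "u \<in> T" "v = vXY u" "u' \<in> T" "w = vXY u'" by auto
    then have "u' = (t * fst u, t * fst (snd u), t * snd (snd u))" using vw unfolding vXY_def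
      by (cases u, cases u') auto
    then have "u' = u" using g u unfolding goodT_def by blast
    then show "w = v" using u by simp
  qed
qed

lemma core_b: "homog (Suc n) F \<Longrightarrow> b \<noteq> 0 \<Longrightarrow> goodT (Suc n) F a b c T \<Longrightarrow> \<exists>G. homog n G \<and> F = tpoly_mult (linform a b c) G"
proof -
  assume h: "homog (Suc n) F" "b \<noteq> 0" "goodT (Suc n) F a b c T"
  obtain G where G: "homog n G" "swYZ F = tpoly_mult (linform a c b) G"
    using core'[OF homog_swYZ[OF h(1)] h(2) goodT_YZ[OF h(3)]] by blast
  have "F = swYZ (swYZ F)" by simp
  also have "\<dots> = swYZ (tpoly_mult (linform a c b) (swYZ (swYZ G)))" using G by simp
  also have "\<dots> = tpoly_mult (linform a b c) (swYZ G)" unfolding mult_swYZ by simp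
  finally show ?thesis using homog_swYZ[OF G(1)] by blast
qed

lemma core_a: "homog (Suc n) F \<Longrightarrow> a \<noteq> 0 \<Longrightarrow> goodT (Suc n) F a b c T \<Longrightarrow> \<exists>G. homog n G \<and> F = tpoly_mult (linform a b c) G"
proof -
  assume h: "homog (Suc n) F" "a \<noteq> 0" "goodT (Suc n) F a b c T"
  obtain G where G: "homog n G" "swXY F = tpoly_mult (linform b a c) G"
    using core_b[OF homog_swXY[OF h(1)] h(2) goodT_XY[OF h(3)]] by blast
  have "F = swXY (swXY F)" by simp
  also have "\<dots> = swXY (tpoly_mult (linform b a c) (swXY (swXY G)))" using G by simp
  also have "\<dots> = tpoly_mult (linform a b c) (swXY G)" unfolding mult_swXY by simp
  finally show ?thesis using homog_swXY[OF G(1)] by blast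
qed

lemma bez: "homog (Suc n) F \<Longrightarrow> (a,b,c) \<noteq> (0,0,0) \<Longrightarrow> goodT (Suc n) F a b c T \<Longrightarrow> \<exists>G. homog n G \<and> F = tpoly_mult (linform a b c) G"
proof -
  assume h: "homog (Suc n) F" "(a,b,c) \<noteq> (0,0,0)" "goodT (Suc n) F a b c T"
  show ?thesis
  proof (cases "c = 0")
    case False then show ?thesis using core'[OF h(1) _ h(3)] by blast
  next
    case c: True
    show ?thesis
    proof (cases "b = 0")
      case False then show ?thesis using core_b[OF h(1) _ h(3)] by blast
    next
      case True
      then have "a \<noteq> 0" using c h(2) by auto
      then show ?thesis using core_a[OF h(1) _ h(3)] by blast
    qed
  qed
qed

definition sc :: "'a::field \<Rightarrow> 'a \<times> 'a \<times> 'a \<Rightarrow> 'a \<times> 'a \<times> 'a" where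
  "sc t v = (t * fst v, t * fst (snd v), t * snd (snd v))"

definition dotp :: "'a::comm_ring_1 \<times> 'a \<times> 'a \<Rightarrow> 'a \<times> 'a \<times> 'a \<Rightarrow> 'a" where
  "dotp u v = fst u * fst v + fst (snd u) * fst (snd v) + snd (snd u) * snd (snd v)"

definition cross :: "'a::comm_ring_1 \<times> 'a \<times> 'a \<Rightarrow> 'a \<times> 'a \<times> 'a \<Rightarrow> 'a \<times> 'a \<times> 'a" where
  "cross u v = (fst (snd u) * snd (snd v) - snd (snd u) * fst (snd v),
                snd (snd u) * fst v - fst u * snd (snd v),
                fst u * fst (snd v) - fst (snd u) * fst v)"

lemma pc_mem: "w \<in> proj_class v \<longleftrightarrow> (\<exists>t. t \<noteq> 0 \<and> w = sc t v)"
  unfolding proj_class_def sc_def by auto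

lemma pc_self: "v \<in> proj_class (v::'a::field \<times> 'a \<times> 'a)"
  unfolding pc_mem sc_def by (rule exI[of _ 1]) auto

lemma sc_sc: "sc s (sc t v) = sc (s * t) v"
  unfolding sc_def by (simp add: mult.assoc)

lemma sc_1: "sc 1 v = (v::'a::field \<times> 'a \<times> 'a)"
  unfolding sc_def by simp

lemma pc_eq: "w \<in> proj_class v \<Longrightarrow> proj_class w = proj_class (v::'a::field \<times> 'a \<times> 'a)"
proof -
  assume "w \<in> proj_class v"
  then obtain t where t: "t \<noteq> 0" "w = sc t v" unfolding pc_mem by auto
  have "v = sc (1/t) w" using t by (simp add: sc_sc sc_1)
  show ?thesis
  proof
    show "proj_class w \<subseteq> proj_class v"
    proof
      fix x assume "x \<in> proj_class w"
      then obtain s where "s \<noteq> 0" "x = sc s w" unfolding pc_mem by auto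
      then have "x = sc (s * t) v" using t by (simp add: sc_sc)
      then show "x \<in> proj_class v" using \<open>s \<noteq> 0\<close> t unfolding pc_mem by (intro exI[of _ "s*t"]) simp
    qed
    show "proj_class v \<subseteq> proj_class w"
    proof
      fix x assume "x \<in> proj_class v"
      then obtain s where "s \<noteq> 0" "x = sc s v" unfolding pc_mem by auto
      then have "x = sc (s / t) w" using t by (simp add: sc_sc)
      then show "x \<in> proj_class w" using \<open>s \<noteq> 0\<close> t unfolding pc_mem by (intro exI[of _ "s/t"]) simp
    qed
  qed
qed

lemma sc_nz: "v \<noteq> (0,0,0) \<Longrightarrow> t \<noteq> 0 \<Longrightarrow> sc t v \<noteq> (0,0,0::'a::field)"
  unfolding sc_def by (cases v) auto

lemma pc_nz: "v \<noteq> (0,0,0) \<Longrightarrow> w \<in> proj_class v \<Longrightarrow> w \<noteq> (0,0,0::'a::field)"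
proof -
  assume v: "v \<noteq> (0,0,0)" and "w \<in> proj_class v"
  then obtain t where "t \<noteq> 0" "w = sc t v" unfolding pc_mem by auto
  then show ?thesis using sc_nz[OF v] by simp
qed

lemma sc_inj: "v \<noteq> (0,0,0) \<Longrightarrow> sc s v = sc t v \<Longrightarrow> s = (t::'a::field)"
  unfolding sc_def by (cases v) (auto simp: mult_cancel_right)

lemma pc_card: "v \<noteq> (0,0,0) \<Longrightarrow> card (proj_class v) = CARD('a) - 1"
  for v :: "'a::{finite,field} \<times> 'a \<times> 'a"
proof -
  assume v: "v \<noteq> (0,0,0)"
  have "proj_class v = (\<lambda>t. sc t v) ` (UNIV - {0::'a})" by (rule set_eqI) (auto simp: pc_mem image_iff)
  moreover have "inj_on (\<lambda>t. sc t v) (UNIV - {0::'a})" using sc_inj[OF v] by (auto intro: inj_onI)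
  ultimately have "card (proj_class v) = card (UNIV - {0::'a})" by (simp add: card_image)
  then show ?thesis by (simp add: card_Diff_singleton)
qed

lemma classes_count:
  fixes S :: "('a::{finite,field} \<times> 'a \<times> 'a) set"
  assumes nz: "(0,0,0) \<notin> S" and cl: "\<And>v t. v \<in> S \<Longrightarrow> t \<noteq> 0 \<Longrightarrow> sc t v \<in> S"
  shows "(CARD('a) - 1) * card {proj_class v | v. v \<in> S} = card S"
proof -
  let ?C = "{proj_class v | v. v \<in> S}"
  have U: "\<Union>?C = S"
  proof
    show "\<Union>?C \<subseteq> S"
    proof
      fix w assume "w \<in> \<Union>?C"
      then obtain v where v: "v \<in> S" "w \<in> proj_class v" by blast
      then obtain t where "t \<noteq> 0" "w = sc t v" unfolding pc_mem by blast
      then show "w \<in> S" using cl v(1) by simp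
    qed
    show "S \<subseteq> \<Union>?C"
    proof
      fix v assume "v \<in> S"
      then have "proj_class v \<in> ?C" by blast
      then show "v \<in> \<Union>?C" using pc_self[of v] by blast
    qed
  qed
  have "(CARD('a) - 1) * card ?C = card (\<Union>?C)"
  proof (rule card_partition)
    show "finite ?C" by simp
    show "finite (\<Union>?C)" by simp
    show "card c = CARD('a) - 1" if "c \<in> ?C" for c
    proof -
      obtain v where v: "v \<in> S" "c = proj_class v" using \<open>c \<in> ?C\<close> by blast
      have "v \<noteq> (0,0,0)" using v nz by metis
      then show ?thesis using pc_card v by simp
    qed
    show "c1 \<inter> c2 = {}" if c12: "c1 \<in> ?C" "c2 \<in> ?C" "c1 \<noteq> c2" for c1 c2
    proof (rule ccontr)
      assume "c1 \<inter> c2 \<noteq> {}"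
      then obtain w where w: "w \<in> c1" "w \<in> c2" by blast
      obtain v1 where v1: "c1 = proj_class v1" using c12(1) by blast
      obtain v2 where v2: "c2 = proj_class v2" using c12(2) by blast
      have "c1 = proj_class w" using pc_eq w(1) v1 by metis
      moreover have "c2 = proj_class w" using pc_eq w(2) v2 by metis
      ultimately show False using c12(3) by simp
    qed
  qed
  then show ?thesis using U by simp
qed

lemma card_P2: "(CARD('a::{finite,field}) - 1) * card (P2 :: ('a \<times> 'a \<times> 'a) set set) = CARD('a)^3 - 1"
proof -
  have "P2 = {proj_class v | v::'a \<times> 'a \<times> 'a. v \<in> UNIV - {(0,0,0)}}" unfolding P2_def by auto
  moreover have "(CARD('a) - 1) * card {proj_class v | v::'a \<times> 'a \<times> 'a. v \<in> UNIV - {(0,0,0)}} = card (UNIV - {(0,0,0)::'a \<times> 'a \<times> 'a})"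
    by (rule classes_count) (auto simp: sc_nz)
  moreover have "card (UNIV - {(0,0,0)::'a \<times> 'a \<times> 'a}) = CARD('a)^3 - 1"
    by (simp add: card_Diff_singleton power3_eq_cube)
  ultimately show ?thesis by simp
qed

lemma on_line_pc: "on_line (proj_class u) (proj_class v) \<longleftrightarrow> dotp u v = (0::'a::field)"
proof
  assume "on_line (proj_class u) (proj_class v)"
  then show "dotp u v = 0" using pc_self[of u] pc_self[of v] unfolding on_line_def dotp_def
    by (cases u, cases v) fastforce
next
  assume d: "dotp u v = 0"
  show "on_line (proj_class u) (proj_class v)" unfolding on_line_def
  proof (intro ballI, clarify)
    fix a b c x y z assume "(a,b,c) \<in> proj_class u" "(x,y,z) \<in> proj_class v"
    then obtain s t where "(a,b,c) = sc s u" "(x,y,z) = sc t v" unfolding pc_mem by blast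
    then have "a*x+b*y+c*z = s * t * dotp u v" unfolding sc_def dotp_def by (auto simp: algebra_simps)
    then show "a*x+b*y+c*z = 0" using d by simp
  qed
qed

lemma on_line_sym1: "on_line l p \<Longrightarrow> on_line p (l :: ('a::field \<times> 'a \<times> 'a) set)"
  unfolding on_line_def
proof (clarify)
  fix a b c x y z assume H: "\<forall>(a, b, c)\<in>l. \<forall>(x, y, z)\<in>p. a * x + b * y + c * z = 0"
    and "(a,b,c) \<in> p" "(x,y,z) \<in> l"
  then have "x * a + y * b + z * c = 0" by fastforce
  then show "a * x + b * y + c * z = 0" by (simp add: mult.commute)
qed

lemma on_line_sym: "on_line l p = on_line p (l :: ('a::field \<times> 'a \<times> 'a) set)"
  using on_line_sym1 by blast

lemma dotp_sc: "dotp u (sc t v) = t * dotp u (v::'a::field \<times> 'a \<times> 'a)"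
  unfolding dotp_def sc_def by (simp add: algebra_simps)

lemma hyper_card:
  fixes u :: "'a::{finite,field} \<times> 'a \<times> 'a"
  assumes u: "u \<noteq> (0,0,0)"
  shows "card {v. dotp u v = 0} = CARD('a)^2"
proof -
  obtain u1 u2 u3 where uu: "u = (u1,u2,u3)" by (cases u) auto
  obtain w where w: "dotp u w = 1"
  proof (cases "u1 = 0")
    case False then show ?thesis using that[of "(1/u1,0,0)"] unfolding uu dotp_def by simp
  next
    case u1: True
    show ?thesis
    proof (cases "u2 = 0")
      case False then show ?thesis using that[of "(0,1/u2,0)"] unfolding uu dotp_def by simp
    next
      case True
      then have "u3 \<noteq> 0" using u u1 uu by auto
      then show ?thesis using that[of "(0,0,1/u3)"] unfolding uu dotp_def by simp
    qed
  qed
  define tr where "tr t v = (fst v + t * fst w, fst (snd v) + t * fst (snd w), snd (snd v) + t * snd (snd w))"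
    for t :: 'a and v :: "'a \<times> 'a \<times> 'a"
  have dtr: "dotp u (tr t v) = dotp u v + t" for t v
  proof -
    have "dotp u (tr t v) = dotp u v + t * dotp u w" unfolding tr_def dotp_def by (simp add: algebra_simps)
    then show ?thesis using w by simp
  qed
  have fib: "{v. dotp u v = t} = tr t ` {v. dotp u v = 0}" for t
  proof (rule set_eqI, rule iffI)
    fix v assume "v \<in> {v. dotp u v = t}"
    then have "dotp u v = t" by simp
    moreover have "tr t (tr (-t) v) = v" unfolding tr_def by simp
    moreover have "dotp u (tr (-t) v) = 0" using dtr[of "-t" v] \<open>dotp u v = t\<close> by simp
    ultimately show "v \<in> tr t ` {v. dotp u v = 0}" by (metis (mono_tags) image_eqI mem_Collect_eq)
  next
    fix v assume "v \<in> tr t ` {v. dotp u v = 0}"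
    then show "v \<in> {v. dotp u v = t}" using dtr by auto
  qed
  have injtr: "inj (tr t)" for t
    unfolding tr_def by (rule injI) (auto simp: prod_eq_iff)
  have cf: "card {v. dotp u v = t} = card {v. dotp u v = 0}" for t
    unfolding fib[of t] by (rule card_image[OF inj_on_subset[OF injtr subset_UNIV]])
  have "UNIV = (\<Union>t. {v. dotp u v = t})" by auto
  then have "CARD('a \<times> 'a \<times> 'a) = card (\<Union>t. {v. dotp u v = t})" by simp
  also have "\<dots> = (\<Sum>t\<in>UNIV. card {v. dotp u v = t})"
    by (rule card_UN_disjoint) auto
  also have "\<dots> = (\<Sum>t\<in>(UNIV::'a set). card {v. dotp u v = 0})" by (intro sum.cong refl) (rule cf)
  also have "\<dots> = CARD('a) * card {v. dotp u v = 0}" by simp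
  finally have "CARD('a) * CARD('a) * CARD('a) = CARD('a) * card {v. dotp u v = 0}" by simp
  then show ?thesis by (simp add: power2_eq_square)
qed

lemma line_card:
  fixes u :: "'a::{finite,field} \<times> 'a \<times> 'a"
  assumes u: "u \<noteq> (0,0,0)"
  shows "card {p \<in> P2. on_line (proj_class u) p} = CARD('a) + 1"
proof -
  define S where "S = {v. dotp u v = 0} - {(0,0,0)}"
  have eq: "{p \<in> P2. on_line (proj_class u) p} = {proj_class v | v. v \<in> S}"
  proof (rule set_eqI, rule iffI)
    fix p assume "p \<in> {p \<in> P2. on_line (proj_class u) p}"
    then obtain v where v: "v \<noteq> (0,0,0)" "p = proj_class v" "on_line (proj_class u) p" unfolding P2_def by auto
    then have "dotp u v = 0" using on_line_pc by metis
    then have "v \<in> S" using v unfolding S_def by simp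
    then show "p \<in> {proj_class v | v. v \<in> S}" using v by blast
  next
    fix p assume "p \<in> {proj_class v | v. v \<in> S}"
    then obtain v where v: "v \<noteq> (0,0,0)" "p = proj_class v" "dotp u v = 0" unfolding S_def by auto
    have "p \<in> P2" unfolding P2_def using v by blast
    moreover have "on_line (proj_class u) p" using v on_line_pc[of u v] by simp
    ultimately show "p \<in> {p \<in> P2. on_line (proj_class u) p}" by simp
  qed
  have "(CARD('a) - 1) * card {proj_class v | v. v \<in> S} = card S"
    by (rule classes_count) (auto simp: S_def dotp_sc sc_nz)
  moreover have "card S = CARD('a)^2 - 1"
  proof -
    have "(0,0,0) \<in> {v. dotp u v = 0}" unfolding dotp_def by simp
    then show ?thesis unfolding S_def using hyper_card[OF u] by (simp add: card_Diff_singleton)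
  qed
  ultimately have A: "(CARD('a) - 1) * card {p \<in> P2. on_line (proj_class u) p} = (CARD('a) - 1) * (CARD('a) + 1)"
    unfolding eq by (simp add: power2_eq_square algebra_simps)
  moreover have "CARD('a) \<ge> 2"
  proof -
    have "card {0, 1::'a} \<le> CARD('a)" by (rule card_mono) auto
    then show ?thesis by simp
  qed
  then have "CARD('a) - 1 \<noteq> 0" by simp
  then show ?thesis using A mult_left_cancel by blast
qed

lemma par:
  fixes a u :: "'a::field \<times> 'a \<times> 'a"
  assumes u: "u \<noteq> (0,0,0)" and c: "cross a u = (0,0,0)"
  shows "\<exists>t. a = sc t u"
proof -
  obtain a1 a2 a3 where aa: "a = (a1,a2,a3)" by (cases a) auto
  obtain u1 u2 u3 where uu: "u = (u1,u2,u3)" by (cases u) auto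
  have e: "a2 * u3 = a3 * u2" "a3 * u1 = a1 * u3" "a1 * u2 = a2 * u1"
    using c unfolding aa uu cross_def by auto
  show ?thesis
  proof (cases "u1 = 0")
    case False
    have "a = sc (a1/u1) u" unfolding aa uu sc_def using False e
      by (auto simp: field_simps)
    then show ?thesis by blast
  next
    case u1: True
    show ?thesis
    proof (cases "u2 = 0")
      case False
      have "a = sc (a2/u2) u" unfolding aa uu sc_def using False e u1
        by (auto simp: field_simps)
      then show ?thesis by blast
    next
      case True
      then have u3: "u3 \<noteq> 0" using u u1 uu by auto
      have "a = sc (a3/u3) u" unfolding aa uu sc_def using u3 e u1 True
        by (auto simp: field_simps)
      then show ?thesis by blast
    qed
  qed
qed

lemma two_points:
  fixes v w :: "'a::field \<times> 'a \<times> 'a"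
  assumes v: "v \<noteq> (0,0,0)" and w: "w \<noteq> (0,0,0)" and ne: "proj_class v \<noteq> proj_class w"
  shows "{l \<in> P2. on_line l (proj_class v) \<and> on_line l (proj_class w)} = {proj_class (cross v w)}"
proof -
  have cnz: "cross v w \<noteq> (0,0,0)"
  proof
    assume "cross v w = (0,0,0)"
    then have "cross w v = (0,0,0)" unfolding cross_def by (auto simp: prod_eq_iff algebra_simps)
    then obtain t where t: "w = sc t v" using par[OF v] by blast
    then have "t \<noteq> 0" using w unfolding sc_def by auto
    then have "w \<in> proj_class v" using t unfolding pc_mem by auto
    then show False using pc_eq ne by metis
  qed
  have d1: "dotp (cross v w) v = 0" "dotp (cross v w) w = 0"
    unfolding dotp_def cross_def by (simp_all add: algebra_simps)
  show ?thesis
  proof (rule set_eqI, rule iffI)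
    fix l assume "l \<in> {l \<in> P2. on_line l (proj_class v) \<and> on_line l (proj_class w)}"
    then obtain a where a: "a \<noteq> (0,0,0)" "l = proj_class a" "on_line l (proj_class v)" "on_line l (proj_class w)"
      unfolding P2_def by auto
    have da: "dotp a v = 0" "dotp a w = 0" using a on_line_pc by metis+
    have "cross a (cross v w) = (0,0,0)"
    proof -
      obtain a1 a2 a3 where aa: "a = (a1,a2,a3)" by (cases a) auto
      obtain v1 v2 v3 where vv: "v = (v1,v2,v3)" by (cases v) auto
      obtain w1 w2 w3 where ww: "w = (w1,w2,w3)" by (cases w) auto
      have "cross a (cross v w) = (v1 * dotp a w - w1 * dotp a v, v2 * dotp a w - w2 * dotp a v, v3 * dotp a w - w3 * dotp a v)"
        unfolding aa vv ww cross_def dotp_def by (simp add: algebra_simps)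
      then show ?thesis using da by simp
    qed
    then obtain t where t: "a = sc t (cross v w)" using par[OF cnz] by blast
    then have "t \<noteq> 0" using a(1) unfolding sc_def by auto
    then have "a \<in> proj_class (cross v w)" using t unfolding pc_mem by auto
    then have "proj_class a = proj_class (cross v w)" by (rule pc_eq)
    then show "l \<in> {proj_class (cross v w)}" using a(2) by simp
  next
    fix l assume "l \<in> {proj_class (cross v w)}"
    then have l: "l = proj_class (cross v w)" by simp
    have "l \<in> P2" unfolding P2_def l using cnz by blast
    moreover have "on_line l (proj_class v)" "on_line l (proj_class w)" unfolding l on_line_pc using d1 by auto
    ultimately show "l \<in> {l \<in> P2. on_line l (proj_class v) \<and> on_line l (proj_class w)}" by simp
  qed
qed

lemma card_P2': "card (P2 :: ('a::{finite,field} \<times> 'a \<times> 'a) set set) = CARD('a)^2 + CARD('a) + 1"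
proof -
  have q2: "CARD('a) \<ge> 2"
  proof -
    have "card {0, 1::'a} \<le> CARD('a)" by (rule card_mono) auto
    then show ?thesis by simp
  qed
  have "(CARD('a) - 1) * card (P2 :: ('a \<times> 'a \<times> 'a) set set) = CARD('a)^3 - 1" by (rule card_P2)
  also have "\<dots> = (CARD('a) - 1) * (CARD('a)^2 + CARD('a) + 1)"
  proof -
    obtain m where m: "CARD('a) = Suc m" using q2 by (cases "CARD('a)") auto
    show ?thesis unfolding m by (simp add: algebra_simps power2_eq_square power3_eq_cube)
  qed
  finally have A: "(CARD('a) - 1) * card (P2 :: ('a \<times> 'a \<times> 'a) set set) = (CARD('a) - 1) * (CARD('a)^2 + CARD('a) + 1)" .
  have "CARD('a) - 1 \<noteq> 0" using q2 by simp
  then show ?thesis using A mult_left_cancel by blast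
qed

lemma P2_rep: "p \<in> P2 \<Longrightarrow> \<exists>v. v \<noteq> (0,0,0) \<and> p = proj_class v"
  unfolding P2_def by blast

lemma card_filter_sum: "finite A \<Longrightarrow> card {x\<in>A. P x} = (\<Sum>x\<in>A. if P x then 1 else (0::nat))"
  by (subst sum.inter_filter[symmetric]) simp_all

lemma lines_through:
  assumes "p \<in> (P2 :: ('a::{finite,field} \<times> 'a \<times> 'a) set set)"
  shows "card {l\<in>P2. on_line l p} = CARD('a) + 1"
proof -
  obtain v where v: "v \<noteq> (0,0,0)" "p = proj_class v" using P2_rep[OF assms] by blast
  have "{l\<in>P2. on_line l p} = {l\<in>P2. on_line (proj_class v) l}"
    by (rule Collect_cong) (metis on_line_sym v(2))
  then show ?thesis using line_card[OF v(1)] by simp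
qed

lemma lines_through2:
  assumes "p \<in> (P2 :: ('a::{finite,field} \<times> 'a \<times> 'a) set set)" "p' \<in> P2" "p \<noteq> p'"
  shows "card {l\<in>P2. on_line l p \<and> on_line l p'} = 1"
proof -
  obtain v where v: "v \<noteq> (0,0,0)" "p = proj_class v" using P2_rep[OF assms(1)] by blast
  obtain w where w: "w \<noteq> (0,0,0)" "p' = proj_class w" using P2_rep[OF assms(2)] by blast
  show ?thesis using two_points[OF v(1) w(1)] assms(3) v w by simp
qed

lemma bezout_count:
  fixes F :: "('a::{finite,field}) tpoly"
  assumes hF: "homog (Suc n) F" and nc: "no_Fq_linear_components (Suc n) F"
    and l: "l \<in> P2"
  shows "card {p \<in> rat_points (Suc n) F. on_line l p} \<le> Suc n"
proof (rule ccontr)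
  assume big: "\<not> ?thesis"
  define Pts where "Pts = {p \<in> rat_points (Suc n) F. on_line l p}"
  obtain u where u: "u \<noteq> (0,0,0)" "l = proj_class u" using P2_rep[OF l] by blast
  obtain a b c where abc: "u = (a,b,c)" by (cases u) auto
  define rep where "rep p = (SOME v. v \<in> p)" for p :: "('a \<times> 'a \<times> 'a) set"
  have rep: "rep p \<in> p" "rep p \<noteq> (0,0,0)" "p = proj_class (rep p)" if pP2: "p \<in> P2" for p
  proof -
    obtain v where v: "v \<noteq> (0,0,0)" "p = proj_class v" using P2_rep[OF pP2] by blast
    have "v \<in> p" using v pc_self by metis
    then show r: "rep p \<in> p" unfolding rep_def by (rule someI)
    then show "rep p \<noteq> (0,0,0)" using pc_nz v by metis
    show "p = proj_class (rep p)" using r v pc_eq by metis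
  qed
  have PtsP2: "Pts \<subseteq> P2" unfolding Pts_def rat_points_def by auto
  have finPts: "finite Pts" by simp
  define T where "T = rep ` Pts"
  have inj: "inj_on rep Pts"
  proof
    fix p p' assume "p \<in> Pts" "p' \<in> Pts" "rep p = rep p'"
    then show "p = p'" using rep PtsP2 by (metis subsetD)
  qed
  have cardT: "card T = card Pts" unfolding T_def by (rule card_image[OF inj])
  have "goodT (Suc n) F a b c T"
    unfolding goodT_def
  proof (intro conjI ballI allI impI)
    show "finite T" unfolding T_def by simp
    show "Suc n < card T" using big cardT unfolding Pts_def by simp
  next
    fix v assume "v \<in> T"
    then obtain p where p: "p \<in> Pts" "v = rep p" unfolding T_def by auto
    have pP: "p \<in> P2" using p PtsP2 by auto
    show "v \<noteq> (0,0,0)" using rep(2)[OF pP] p by simp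
    have "on_line (proj_class u) (proj_class v)" using p rep(3)[OF pP] u unfolding Pts_def by simp
    then have "dotp u v = 0" using on_line_pc by metis
    then show "a * fst v + b * fst (snd v) + c * snd (snd v) = 0" unfolding abc dotp_def by simp
    show "tpoly_eval (Suc n) F v = 0" using p rep(1)[OF pP] unfolding Pts_def rat_points_def by auto
  next
    fix v w t assume vw: "v \<in> T" "w \<in> T" "w = (t * fst v, t * fst (snd v), t * snd (snd v))"
    then obtain p p' where pp: "p \<in> Pts" "v = rep p" "p' \<in> Pts" "w = rep p'" unfolding T_def by auto
    have pP: "p \<in> P2" "p' \<in> P2" using pp PtsP2 by auto
    have "w = sc t v" using vw unfolding sc_def by simp
    moreover have "t \<noteq> 0" using vw rep(2)[OF pP(2)] pp by auto
    ultimately have "w \<in> proj_class v" unfolding pc_mem by blast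
    then have "proj_class w = proj_class v" by (rule pc_eq)
    then have "p' = p" using rep(3)[OF pP(1)] rep(3)[OF pP(2)] pp by simp
    then show "w = v" using pp by simp
  qed
  moreover have "(a,b,c) \<noteq> (0,0,0)" using u abc by simp
  ultimately obtain G where "homog n G" "F = tpoly_mult (linform a b c) G"
    using bez[OF hF] by blast
  then show False using nc \<open>(a,b,c) \<noteq> (0,0,0)\<close> unfolding no_Fq_linear_components_def by auto
qed

theorem lemma3p13:
  fixes F :: "('a::{finite,field}) tpoly"
  assumes "CARD('a) \<ge> 5"
    and "homog (CARD('a) - 1) F" and "F \<noteq> (\<lambda>_. 0)"
    and "no_Fq_linear_components (CARD('a) - 1) F"
    and "Nq (CARD('a) - 1) F = (CARD('a) - 1)^2"
  shows "k0 (CARD('a) - 1) F \<le> CARD('a) - 4"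
proof -
  note q5 = assms(1)
  define q where "q = CARD('a)"
  define n where "n = q - 2"
  have dq: "CARD('a) - 1 = Suc n" using q5 unfolding n_def q_def by simp
  have hF: "homog (Suc n) F" using assms(2) dq by simp
  have nc: "no_Fq_linear_components (Suc n) F" using assms(4) dq by simp
  define X where "X = rat_points (Suc n) F"
  have XP: "X \<subseteq> P2" unfolding X_def rat_points_def by auto
  have cardX: "card X = (q-1)^2" using assms(5) dq unfolding Nq_def X_def q_def by simp
  define C where "C = P2 - X"
  have CP: "C \<subseteq> P2" unfolding C_def by auto
  define xl where "xl l = card {p\<in>X. on_line l p}" for l
  define cl where "cl l = card {p\<in>C. on_line l p}" for l
  have sum_l: "xl l + cl l = q + 1" if lP: "l \<in> P2" for l
  proof -
    obtain u where u: "u \<noteq> (0,0,0)" "l = proj_class u" using P2_rep[OF lP] by blast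
    have "{p\<in>P2. on_line l p} = {p\<in>X. on_line l p} \<union> {p\<in>C. on_line l p}"
      using XP unfolding C_def by auto
    moreover have "card ({p\<in>X. on_line l p} \<union> {p\<in>C. on_line l p}) = xl l + cl l"
      unfolding xl_def cl_def by (rule card_Un_disjoint) (auto simp: C_def)
    ultimately show ?thesis using line_card[OF u(1)] u(2) unfolding q_def by simp
  qed
  have xle: "xl l \<le> q - 1" if lP: "l \<in> P2" for l
    using bezout_count[OF hF nc lP] dq unfolding xl_def X_def q_def by simp
  show ?thesis
  proof (cases "\<exists>l\<in>P2. xl l \<le> q - 4")
    case True
    then obtain l where l: "l \<in> P2" "xl l \<le> q - 4" by blast
    have "l \<in> {l' \<in> (lines :: ('a \<times> 'a \<times> 'a) set set). card {p \<in> rat_points (CARD('a) - 1) F. on_line l' p} = xl l}"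
      using l unfolding lines_def xl_def X_def dq by simp
    then have "{l' \<in> (lines :: ('a \<times> 'a \<times> 'a) set set). card {p \<in> rat_points (CARD('a) - 1) F. on_line l' p} = xl l} \<noteq> {}"
      by blast
    then have "a_count (CARD('a) - 1) F (xl l) \<noteq> 0" unfolding a_count_def by simp
    then have "k0 (CARD('a) - 1) F \<le> xl l" unfolding k0_def by (rule Least_le)
    then show ?thesis using l unfolding q_def by simp
  next
    case False
    then have big: "q - 4 < xl l" if "l \<in> P2" for l using that by auto
    have c24: "2 \<le> cl l \<and> cl l \<le> 4" if lP: "l \<in> P2" for l
      using sum_l[OF lP] xle[OF lP] big[OF lP] q5 unfolding q_def by linarith
    have finC: "finite C" by simp
    have S1: "(\<Sum>l\<in>P2. cl l) = card C * (q + 1)"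
    proof -
      have "(\<Sum>l\<in>P2. cl l) = (\<Sum>l\<in>P2. \<Sum>p\<in>C. if on_line l p then 1 else 0)"
        unfolding cl_def by (intro sum.cong refl card_filter_sum finC)
      also have "\<dots> = (\<Sum>p\<in>C. \<Sum>l\<in>P2. if on_line l p then 1 else 0)" by (rule sum.swap)
      also have "\<dots> = (\<Sum>p\<in>C. card {l\<in>P2. on_line l p})"
        by (intro sum.cong refl card_filter_sum[symmetric]) simp
      also have "\<dots> = (\<Sum>p\<in>C. q + 1)"
        by (intro sum.cong refl) (use CP lines_through q_def in auto)
      finally show ?thesis by simp
    qed
    have S2: "(\<Sum>l\<in>P2. cl l ^ 2) = card C * (card C + q)"
    proof -
      have "(\<Sum>l\<in>P2. cl l ^ 2) = (\<Sum>l\<in>P2. \<Sum>p\<in>C. \<Sum>p'\<in>C. if on_line l p \<and> on_line l p' then 1 else 0)"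
      proof (intro sum.cong refl)
        fix l
        have "cl l ^ 2 = (\<Sum>p\<in>C. if on_line l p then 1 else 0) * (\<Sum>p'\<in>C. if on_line l p' then 1 else 0)"
          unfolding cl_def power2_eq_square card_filter_sum[OF finC] ..
        also have "\<dots> = (\<Sum>p\<in>C. \<Sum>p'\<in>C. (if on_line l p then 1 else 0) * (if on_line l p' then 1 else 0))"
          by (rule sum_product)
        also have "\<dots> = (\<Sum>p\<in>C. \<Sum>p'\<in>C. if on_line l p \<and> on_line l p' then 1 else 0)"
          by (intro sum.cong refl) simp
        finally show "cl l ^ 2 = (\<Sum>p\<in>C. \<Sum>p'\<in>C. if on_line l p \<and> on_line l p' then 1 else 0)" .
      qed
      also have "\<dots> = (\<Sum>p\<in>C. \<Sum>l\<in>P2. \<Sum>p'\<in>C. if on_line l p \<and> on_line l p' then 1 else 0)"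
        by (rule sum.swap)
      also have "\<dots> = (\<Sum>p\<in>C. \<Sum>p'\<in>C. \<Sum>l\<in>P2. if on_line l p \<and> on_line l p' then 1 else 0)"
      proof (rule sum.cong[OF refl])
        fix p assume "p \<in> C"
        show "(\<Sum>l\<in>P2. \<Sum>p'\<in>C. if on_line l p \<and> on_line l p' then 1 else 0) =
          (\<Sum>p'\<in>C. \<Sum>l\<in>P2. if on_line l p \<and> on_line l p' then (1::nat) else 0)"
          by (rule sum.swap)
      qed
      also have "\<dots> = (\<Sum>p\<in>C. \<Sum>p'\<in>C. card {l\<in>P2. on_line l p \<and> on_line l p'})"
        by (intro sum.cong refl card_filter_sum[symmetric]) simp
      also have "\<dots> = (\<Sum>p\<in>C. \<Sum>p'\<in>C. (if p' = p then q else 0) + 1)"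
      proof (intro sum.cong refl)
        fix p p' assume pp: "p \<in> C" "p' \<in> C"
        show "card {l\<in>P2. on_line l p \<and> on_line l p'} = (if p' = p then q else 0) + 1"
        proof (cases "p' = p")
          case True
          then show ?thesis using lines_through[of p] pp CP unfolding q_def by auto
        next
          case False
          then show ?thesis using lines_through2[of p p'] pp CP by auto
        qed
      qed
      also have "\<dots> = (\<Sum>p\<in>C. q + card C)"
      proof (intro sum.cong refl)
        fix p assume pC: "p \<in> C"
        have "(\<Sum>p'\<in>C. (if p' = p then q else 0) + 1) = (\<Sum>p'\<in>C. (if p' = p then q else 0)) + card C"
          unfolding sum.distrib by simp
        also have "\<dots> = q + card C" using pC finC by simp
        finally show "(\<Sum>p'\<in>C. (if p' = p then q else 0) + 1) = q + card C" .
      qed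
      finally show ?thesis by (simp add: add.commute)
    qed
    have cP2: "card (P2 :: ('a \<times> 'a \<times> 'a) set set) = q^2 + q + 1" unfolding q_def by (rule card_P2')
    have cC: "int (card C) = 3 * int q"
    proof -
      have "card X \<le> card (P2 :: ('a \<times> 'a \<times> 'a) set set)" by (rule card_mono[OF _ XP]) simp
      then have "int (card C) = int (card (P2 :: ('a \<times> 'a \<times> 'a) set set)) - int (card X)"
        unfolding C_def using XP by (simp add: card_Diff_subset of_nat_diff)
      also have "\<dots> = int (q^2 + q + 1) - int ((q - 1)^2)" using cP2 cardX by simp
      also have "\<dots> = 3 * int q"
      proof -
        have "q \<ge> 1" using q5 unfolding q_def by simp
        then have e1: "int (q - 1) = int q - 1" by (simp add: of_nat_diff)
        have e2: "int ((q - 1)^2) = (int (q - 1))^2" by (rule of_nat_power)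
        have e3: "int (q^2 + q + 1) = (int q)^2 + int q + 1" by simp
        show ?thesis unfolding e2 e1 e3 by (simp add: power2_eq_square algebra_simps)
      qed
      finally show ?thesis .
    qed
    define Q where "Q = int q"
    have ineq: "(\<Sum>l\<in>P2. (int (cl l) - 2) * (int (cl l) - 4)) \<le> 0"
    proof (rule sum_nonpos)
      fix l assume "l \<in> (P2 :: ('a \<times> 'a \<times> 'a) set set)"
      then have "2 \<le> int (cl l)" "int (cl l) \<le> 4" using c24 by auto
      then show "(int (cl l) - 2) * (int (cl l) - 4) \<le> 0" by (intro mult_nonneg_nonpos) auto
    qed
    have "(\<Sum>l\<in>P2. (int (cl l) - 2) * (int (cl l) - 4)) = (\<Sum>l\<in>P2. int (cl l ^ 2) - 6 * int (cl l) + 8)"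
      by (intro sum.cong refl) (simp add: algebra_simps power2_eq_square)
    also have "\<dots> = int (\<Sum>l\<in>P2. cl l ^ 2) - 6 * int (\<Sum>l\<in>P2. cl l) + 8 * int (card (P2 :: ('a \<times> 'a \<times> 'a) set set))"
      by (simp add: sum.distrib sum_subtractf sum_distrib_left of_nat_sum)
    also have "\<dots> = 3 * Q * (3 * Q + Q) - 6 * (3 * Q * (Q + 1)) + 8 * (Q^2 + Q + 1)"
      unfolding S1 S2 cP2 using cC unfolding Q_def by (simp add: algebra_simps)
    also have "\<dots> = 2 * ((Q - 1) * (Q - 4))" by (simp add: algebra_simps power2_eq_square)
    finally have "2 * ((Q - 1) * (Q - 4)) \<le> 0" using ineq by simp
    moreover have "(Q - 1) * (Q - 4) > 0" using q5 unfolding Q_def q_def by (intro mult_pos_pos) auto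
    ultimately show ?thesis by simp
  qed
qed

end
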